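(* Let $S=\{p_1,\dots,p_n\}$ be a set of $n$ distinct prime numbers and let $\mathbf{U}_S=U_{p_1}\otimes\cdots\otimes U_{p_n}$ act on $\mathcal{H}^n=\mathcal{V}^{\otimes n}$. Then for real $s>0$ (more generally $\operatorname{Re}s>0$) \[\zeta_{\mathbf{U}_S}(s)=\zeta_{U_{p_1}}(s)\cdots\zeta_{U_{p_n}}(s)=\prod_{p\in S}\frac{1}{1-p^{-s}},\] where $\zeta_{U_{p_j}}$ is the spectral zeta function of $U_{p_j}$ acting on $\mathcal{V}$.
   Context: For a power series $f(x)=\sum_{n\ge0}a_nx^n$ and a positive integer $p$, $U_pf(x)=\sum_{n\ge0}a_{pn}x^n$. For $k\in\mathbb{N}=\{0,1,2,\dots\}$ let $\phi_k(x)=(x\frac{d}{dx})^k\big(\frac{1}{1-x}\big)$, and let $\mathcal{V}$ be the complex vector space spanned by $\phi_0,\phi_1,\phi_2,\dots$. Let $\mathcal{H}^n=\mathcal{V}\otimes\cdots\otimes\mathcal{V}$ ($n$ factors), where $f_1\otimes\cdots\otimes f_n$ is identified with the function $f_1(x_1)\cdots f_n(x_n)$ of $n$ variables. The operator $\mathbf{U}_S$ is defined on pure tensors by $\mathbf{U}_S(f_1\otimes\cdots\otimes f_n)(x_1,\dots,x_n)=(U_{p_1}f_1)(x_1)\cdots(U_{p_n}f_n)(x_n)$ and extended linearly. A number $\lambda$ is an eigenvalue of an operator $A$ on a space $W$ (of functions) if $AF=\lambda F$ for some nonzero $F\in W$; its multiplicity $m(\lambda)$ is the dimension of the corresponding eigenspace.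 For an operator $A$ with nonnegative discrete spectrum, its spectral zeta function is $\zeta_A(s)=\sum_{\lambda\in\operatorname{spec}(A)\setminus\{0\}}m(\lambda)\lambda^{-s}$. *)

theory Defs
  imports "HOL-Analysis.Analysis" "HOL-Computational_Algebra.Formal_Power_Series" "HOL-Library.Function_Algebras"
begin

definition xD :: "complex fps \<Rightarrow> complex fps" where
  "xD f = fps_X * fps_deriv f"

definition phi :: "nat \<Rightarrow> complex fps" where
  "phi k = (xD ^^ k) (inverse (1 - fps_X))"

definition Uop :: "nat \<Rightarrow> complex fps \<Rightarrow> complex fps" where
  "Uop p f = Abs_fps (\<lambda>n. fps_nth f (p * n))"

definition fps_scale :: "complex \<Rightarrow> complex fps \<Rightarrow> complex fps" where
  "fps_scale c f = fps_const c * f"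

definition arr_scale :: "complex \<Rightarrow> (nat list \<Rightarrow> complex) \<Rightarrow> (nat list \<Rightarrow> complex)" where
  "arr_scale c F = (\<lambda>ms. c * F ms)"

definition Vspace :: "complex fps set" where
  "Vspace = module.span fps_scale (range phi)"

section \<open>Several variables: functions of x_1..x_n as coefficient arrays indexed by
  multi-indices (m_1,...,m_n), represented as lists of length n\<close>

text \<open>f_1 (x) ... (x) f_n = f_1(x_1) ... f_n(x_n): coefficient of x_1^m_1 ... x_n^m_n.\<close>
definition tensor :: "complex fps list \<Rightarrow> (nat list \<Rightarrow> complex)" where
  "tensor fs = (\<lambda>ms. if length ms = length fs
                      then (\<Prod>i<length fs. fps_nth (fs ! i) (ms ! i)) else 0)"

definition Hspace :: "nat \<Rightarrow> (nat list \<Rightarrow> complex) set" where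
  "Hspace n = module.span arr_scale
     {tensor fs | fs. length fs = n \<and> set fs \<subseteq> Vspace}"

text \<open>U_S: the linear operator F(x_1..x_n) = sum c_m x^m  \<mapsto>  sum c_{(p_1 m_1,...,p_n m_n)} x^m.
  On pure tensors it equals (U_{p_1} f_1)(x_1)...(U_{p_n} f_n)(x_n).\<close>
definition US :: "nat list \<Rightarrow> (nat list \<Rightarrow> complex) \<Rightarrow> (nat list \<Rightarrow> complex)" where
  "US ps F = (\<lambda>ms. if length ms = length ps then F (map2 (*) ps ms) else 0)"

definition is_eigenvalue ::
    "(complex \<Rightarrow> 'v::ab_group_add \<Rightarrow> 'v) \<Rightarrow> ('v \<Rightarrow> 'v) \<Rightarrow> 'v set \<Rightarrow> complex \<Rightarrow> bool" where
  "is_eigenvalue sc A W mu \<longleftrightarrow> (\<exists>F\<in>W. F \<noteq> 0 \<and> A F = sc mu F)"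

definition eigenspace ::
    "(complex \<Rightarrow> 'v::ab_group_add \<Rightarrow> 'v) \<Rightarrow> ('v \<Rightarrow> 'v) \<Rightarrow> 'v set \<Rightarrow> complex \<Rightarrow> 'v set" where
  "eigenspace sc A W mu = {F \<in> W. A F = sc mu F}"

definition multiplicity_ev ::
    "(complex \<Rightarrow> 'v::ab_group_add \<Rightarrow> 'v) \<Rightarrow> ('v \<Rightarrow> 'v) \<Rightarrow> 'v set \<Rightarrow> complex \<Rightarrow> nat" where
  "multiplicity_ev sc A W mu = vector_space.dim sc (eigenspace sc A W mu)"

definition spec ::
    "(complex \<Rightarrow> 'v::ab_group_add \<Rightarrow> 'v) \<Rightarrow> ('v \<Rightarrow> 'v) \<Rightarrow> 'v set \<Rightarrow> complex set" where
  "spec sc A W = {mu. is_eigenvalue sc A W mu}"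

definition zeta_term ::
    "(complex \<Rightarrow> 'v::ab_group_add \<Rightarrow> 'v) \<Rightarrow> ('v \<Rightarrow> 'v) \<Rightarrow> 'v set \<Rightarrow> complex \<Rightarrow> complex \<Rightarrow> complex" where
  "zeta_term sc A W s mu = of_nat (multiplicity_ev sc A W mu) * mu powr (- s)"

definition spectral_zeta ::
    "(complex \<Rightarrow> 'v::ab_group_add \<Rightarrow> 'v) \<Rightarrow> ('v \<Rightarrow> 'v) \<Rightarrow> 'v set \<Rightarrow> complex \<Rightarrow> complex" where
  "spectral_zeta sc A W s =
     infsum (zeta_term sc A W s) (spec sc A W - {0})"

end

theory Submission
  imports Defs
begin


lemma additive_sum:
  fixes A :: "'v::ab_group_add \<Rightarrow> 'w::ab_group_add"
  assumes addA: "\<And>x y. A (x + y) = A x + A y"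
  shows "A (sum f K) = (\<Sum>i\<in>K. A (f i))"
proof -
  have A0: "A 0 = 0" using addA[of 0 0] by simp
  show ?thesis
  proof (induction K rule: infinite_finite_induct)
    case (infinite A) then show ?case by (simp add: A0)
  next
    case empty then show ?case by (simp add: A0)
  next
    case (insert x F) then show ?case by (simp add: addA)
  qed
qed

lemma eigen_indep:
  fixes sc :: "complex \<Rightarrow> 'v::ab_group_add \<Rightarrow> 'v"
  assumes vs: "vector_space sc"
    and addA: "\<And>x y. A (x + y) = A x + A y" and scA: "\<And>c x. A (sc c x) = sc c (A x)"
    and eig: "\<And>i. i \<in> I \<Longrightarrow> A (b i) = sc (ev i) (b i)"
    and nz: "\<And>i. i \<in> I \<Longrightarrow> b i \<noteq> 0"
    and inj: "inj_on ev I"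
  shows "finite K \<Longrightarrow> K \<subseteq> I \<Longrightarrow> (\<Sum>i\<in>K. sc (c i) (b i)) = 0 \<Longrightarrow> \<forall>i\<in>K. c i = 0"
proof (induction K arbitrary: c rule: finite_induct)
  case empty then show ?case by simp
next
  case (insert j K)
  interpret vector_space sc by fact
  have jI: "j \<in> I" and KI: "K \<subseteq> I" using insert.prems by auto
  have e0: "sc (c j) (b j) + (\<Sum>i\<in>K. sc (c i) (b i)) = 0"
    using insert.prems insert.hyps by simp
  have "A (sc (c j) (b j) + (\<Sum>i\<in>K. sc (c i) (b i))) = 0"
    using e0 addA[of 0 0] by simp
  hence e1: "sc (c j * ev j) (b j) + (\<Sum>i\<in>K. sc (c i * ev i) (b i)) = 0"
    using KI jI by (simp add: addA additive_sum[OF addA] scA eig mult.commute subset_iff)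
  have e2: "sc (c j * ev j) (b j) + (\<Sum>i\<in>K. sc (ev j * c i) (b i)) = 0"
  proof -
    have "sc (ev j) (sc (c j) (b j) + (\<Sum>i\<in>K. sc (c i) (b i))) = 0" using e0 by simp
    thus ?thesis by (simp add: scale_right_distrib scale_sum_right mult.commute)
  qed
  have "(\<Sum>i\<in>K. sc (c i * (ev i - ev j)) (b i)) = 0"
  proof -
    have "(\<Sum>i\<in>K. sc (c i * (ev i - ev j)) (b i)) =
       (\<Sum>i\<in>K. sc (c i * ev i) (b i)) - (\<Sum>i\<in>K. sc (ev j * c i) (b i))"
      by (simp add: sum_subtractf[symmetric] algebra_simps)
    also have "\<dots> = 0" using e1 e2 by (metis add_left_cancel diff_self)
    finally show ?thesis .
  qed
  with insert.IH[of "\<lambda>i. c i * (ev i - ev j)"] KI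
  have "\<forall>i\<in>K. c i * (ev i - ev j) = 0" by blast
  moreover have "\<forall>i\<in>K. ev i \<noteq> ev j"
    using inj KI jI insert.hyps by (metis inj_on_eq_iff subsetD)
  ultimately have cK: "\<forall>i\<in>K. c i = 0" by simp
  hence "(\<Sum>i\<in>K. sc (c i) (b i)) = 0" by simp
  with e0 have "sc (c j) (b j) = 0" by simp
  hence "c j = 0" using nz[OF jI] by simp
  with cK show ?case by simp
qed

context module begin
lemma span_as_sum:
  assumes "F \<in> span (b ` I)"
  obtains K c where "finite K" "K \<subseteq> I" "F = (\<Sum>i\<in>K. scale (c i) (b i))"
proof -
  have "F \<in> {(\<Sum>a\<in>t. scale (r a) a) | t r. finite t \<and> t \<subseteq> b ` I}"
    using assms by (simp only: span_explicit)
  then obtain t r where t: "finite t" "t \<subseteq> b ` I" "F = (\<Sum>a\<in>t. scale (r a) a)"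
    by blast
  from t(2) obtain K where K: "K \<subseteq> I" "inj_on b K" "t = b ` K" using subset_image_inj[of t b I] by blast
  have "F = (\<Sum>i\<in>K. scale (r (b i)) (b i))" unfolding t(3) K(3) by (rule sum.reindex[OF K(2), unfolded comp_def])
  moreover have "finite K" using K t(1) by (simp add: finite_image_iff)
  ultimately show ?thesis using that[of K] K(1) by simp
qed
end

lemma diag_spectrum:
  fixes sc :: "complex \<Rightarrow> 'v::ab_group_add \<Rightarrow> 'v"
  assumes vs: "vector_space sc"
    and addA: "\<And>x y. A (x + y) = A x + A y" and scA: "\<And>c x. A (sc c x) = sc c (A x)"
    and eig: "\<And>i. i \<in> I \<Longrightarrow> A (b i) = sc (ev i) (b i)"
    and nz: "\<And>i. i \<in> I \<Longrightarrow> b i \<noteq> 0"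
    and inj: "inj_on ev I"
    and W: "W = module.span sc (b ` I)" and ev0: "\<And>i. i \<in> I \<Longrightarrow> ev i \<noteq> 0"
  shows "spec sc A W - {0} = ev ` I" and "\<And>i. i \<in> I \<Longrightarrow> multiplicity_ev sc A W (ev i) = 1"
proof -
  interpret vector_space sc by fact
  have key: "F = 0 \<or> (\<exists>i\<in>I. ev i = \<mu> \<and> (\<exists>k. F = sc k (b i)))"
    if F: "F \<in> W" "A F = sc \<mu> F" for F \<mu>
  proof -
    obtain K c where K: "finite K" "K \<subseteq> I" "F = (\<Sum>i\<in>K. sc (c i) (b i))"
      using module.span_as_sum[OF vs[unfolded module_iff_vector_space[symmetric]], of F b I] F W by blast
    have AF: "A F = (\<Sum>i\<in>K. sc (c i * ev i) (b i))"
      using K by (simp add: additive_sum[OF addA] scA eig mult.commute subset_iff)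
    have mF: "sc \<mu> F = (\<Sum>i\<in>K. sc (\<mu> * c i) (b i))"
      using K by (simp add: scale_sum_right)
    have "(\<Sum>i\<in>K. sc (c i * (ev i - \<mu>)) (b i)) =
       (\<Sum>i\<in>K. sc (c i * ev i) (b i)) - (\<Sum>i\<in>K. sc (\<mu> * c i) (b i))"
      by (simp add: sum_subtractf[symmetric] algebra_simps)
    also have "\<dots> = 0" using AF mF F(2) by simp
    finally have sum0: "(\<Sum>i\<in>K. sc (c i * (ev i - \<mu>)) (b i)) = 0" .
    have "\<forall>i\<in>K. c i * (ev i - \<mu>) = 0"
      by (rule eigen_indep[of sc A I b ev K "\<lambda>i. c i * (ev i - \<mu>)", OF vs addA scA eig nz inj K(1) K(2) sum0])
    hence cz: "\<forall>i\<in>K. ev i \<noteq> \<mu> \<longrightarrow> c i = 0" by auto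
    show ?thesis
    proof (cases "\<exists>i\<in>K. ev i = \<mu>")
      case True
      then obtain i0 where i0: "i0 \<in> K" "ev i0 = \<mu>" by blast
      have "\<forall>i\<in>K - {i0}. c i = 0"
        using cz i0 inj K(2) by (metis DiffE inj_on_eq_iff insertI1 subsetD)
      hence "F = sc (c i0) (b i0)"
        using K(1,3) i0(1) by (simp add: sum.remove)
      thus ?thesis using i0 K(2) by blast
    next
      case False
      thus ?thesis using cz K(3) by simp
    qed
  qed
  have es: "eigenspace sc A W (ev i) = range (\<lambda>k. sc k (b i))" if i: "i \<in> I" for i
  proof
    show "eigenspace sc A W (ev i) \<subseteq> range (\<lambda>k. sc k (b i))"
    proof
      fix F assume "F \<in> eigenspace sc A W (ev i)"
      hence F: "F \<in> W" "A F = sc (ev i) F" unfolding eigenspace_def by auto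
      from key[OF F] show "F \<in> range (\<lambda>k. sc k (b i))"
      proof
        assume "F = 0" thus ?thesis by (metis rangeI scale_zero_left)
      next
        assume "\<exists>j\<in>I. ev j = ev i \<and> (\<exists>k. F = sc k (b j))"
        then obtain j k where "j \<in> I" "ev j = ev i" "F = sc k (b j)" by blast
        with i inj have "F = sc k (b i)" by (metis inj_on_eq_iff)
        thus ?thesis by blast
      qed
    qed
  next
    show "range (\<lambda>k. sc k (b i)) \<subseteq> eigenspace sc A W (ev i)"
    proof
      fix F assume "F \<in> range (\<lambda>k. sc k (b i))"
      then obtain k where k: "F = sc k (b i)" by blast
      have "F \<in> W" unfolding W k using i by (intro span_scale span_base) auto
      moreover have "A F = sc (ev i) F" unfolding k using i by (simp add: scA eig mult.commute)
      ultimately show "F \<in> eigenspace sc A W (ev i)" unfolding eigenspace_def by simp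
    qed
  qed
  show "multiplicity_ev sc A W (ev i) = 1" if i: "i \<in> I" for i
  proof -
    have "multiplicity_ev sc A W (ev i) = dim (span {b i})"
      unfolding multiplicity_ev_def es[OF i] span_singleton ..
    also have "\<dots> = card {b i}"
      by (rule dim_span_eq_card_independent) (use nz[OF i] in simp)
    finally show ?thesis by simp
  qed
  show "spec sc A W - {0} = ev ` I"
  proof
    show "spec sc A W - {0} \<subseteq> ev ` I"
    proof
      fix \<mu> assume "\<mu> \<in> spec sc A W - {0}"
      then obtain F where F: "F \<in> W" "F \<noteq> 0" "A F = sc \<mu> F"
        unfolding spec_def is_eigenvalue_def by auto
      from key[OF F(1,3)] F(2) show "\<mu> \<in> ev ` I" by auto
    qed
  next
    show "ev ` I \<subseteq> spec sc A W - {0}"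
    proof
      fix \<mu> assume "\<mu> \<in> ev ` I"
      then obtain i where i: "i \<in> I" "\<mu> = ev i" by blast
      have "b i \<in> W" unfolding W using i by (intro span_base) auto
      thus "\<mu> \<in> spec sc A W - {0}"
        unfolding spec_def is_eigenvalue_def using i nz eig ev0 by auto
    qed
  qed
qed

lemma diag_zeta:
  fixes sc :: "complex \<Rightarrow> 'v::ab_group_add \<Rightarrow> 'v"
  assumes vs: "vector_space sc"
    and addA: "\<And>x y. A (x + y) = A x + A y" and scA: "\<And>c x. A (sc c x) = sc c (A x)"
    and eig: "\<And>i. i \<in> I \<Longrightarrow> A (b i) = sc (ev i) (b i)"
    and nz: "\<And>i. i \<in> I \<Longrightarrow> b i \<noteq> 0"
    and inj: "inj_on ev I"
    and W: "W = module.span sc (b ` I)" and ev0: "\<And>i. i \<in> I \<Longrightarrow> ev i \<noteq> 0"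
    and hs: "((\<lambda>i. ev i powr (- s)) has_sum S) I"
  shows "(zeta_term sc A W s has_sum S) (spec sc A W - {0})"
proof -
  note ds = diag_spectrum[of sc A I b ev W, OF vs addA scA eig nz inj W ev0]
  have "((zeta_term sc A W s \<circ> ev) has_sum S) I"
    using hs by (rule has_sum_cong[THEN iffD1, rotated]) (simp add: zeta_term_def ds(2))
  moreover have sp: "spec sc A W - {0} = ev ` I" by (rule ds(1))
  ultimately show ?thesis using has_sum_reindex[OF inj, of "zeta_term sc A W s" S] by simp
qed


section \<open>Single variable\<close>

lemma vs_fps: "vector_space fps_scale"
proof
  fix a b :: complex and x y :: "complex fps"
  show "fps_scale a (x + y) = fps_scale a x + fps_scale a y"
    by (simp add: fps_scale_def distrib_left)
  show "fps_scale (a + b) x = fps_scale a x + fps_scale b x"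
    by (simp add: fps_scale_def fps_eq_iff algebra_simps)
  show "fps_scale a (fps_scale b x) = fps_scale (a * b) x"
    by (simp add: fps_scale_def fps_eq_iff algebra_simps)
  show "fps_scale 1 x = x"
    by (simp add: fps_scale_def)
qed

lemma xD_nth: "fps_nth (xD f) n = of_nat n * fps_nth f n"
  by (cases n) (simp_all add: xD_def fps_X_mult_nth fps_deriv_nth)

lemma phi_nth: "fps_nth (phi k) n = of_nat n ^ k"
proof (induction k)
  case 0 then show ?case by (simp add: phi_def fps_inverse_one_minus_fps_X)
next
  case (Suc k)
  have "phi (Suc k) = xD (phi k)" by (simp add: phi_def)
  then show ?case using Suc by (simp add: xD_nth)
qed

lemma Uop_add: "Uop p (f + g) = Uop p f + Uop p g"
  by (simp add: Uop_def fps_eq_iff)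

lemma Uop_scale: "Uop p (fps_scale c f) = fps_scale c (Uop p f)"
  by (simp add: Uop_def fps_eq_iff fps_scale_def)

lemma Uop_phi: "Uop p (phi k) = fps_scale (of_nat p ^ k) (phi k)"
  by (simp add: Uop_def fps_eq_iff fps_scale_def phi_nth power_mult_distrib)

lemma phi_nz: "phi k \<noteq> 0"
proof
  assume "phi k = 0"
  hence "fps_nth (phi k) 1 = 0" by simp
  thus False by (simp add: phi_nth)
qed

lemma inj_pow: "(p::nat) \<ge> 2 \<Longrightarrow> inj (\<lambda>k. (of_nat p ^ k :: complex))"
proof (rule injI)
  fix a b assume p: "p \<ge> 2" and "(of_nat p ^ a :: complex) = of_nat p ^ b"
  hence "(of_nat (p ^ a) :: complex) = of_nat (p ^ b)" by simp
  hence "p ^ a = p ^ b" by (simp only: of_nat_eq_iff)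
  thus "a = b" using p by simp
qed

lemma powr_nat_power: "(of_nat m ^ k :: complex) powr z = (of_nat m powr z) ^ k"
proof (induction k)
  case 0 then show ?case by simp
next
  case (Suc k)
  have "(of_nat m ^ Suc k :: complex) powr z = (of_nat m * of_nat (m ^ k)) powr z" by simp
  also have "\<dots> = of_nat m powr z * of_nat (m ^ k) powr z"
    by (rule powr_times_real) (simp_all add: Reals_of_nat)
  finally show ?case using Suc by simp
qed

lemma norm_p_powr_lt1:
  assumes "(p::nat) \<ge> 2" "Re s > 0"
  shows "norm (of_nat p powr (- s) :: complex) < 1"
proof -
  have "norm (of_nat p powr (- s) :: complex) = Re (of_nat p) powr Re (- s)"
    by (rule norm_powr_real_powr) (simp_all add: Reals_of_nat)
  also have "\<dots> = real p powr (- Re s)" by simp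
  also have "\<dots> < 1" using assms by (intro powr_less_one) auto
  finally show ?thesis .
qed

lemma geom_has_sum:
  fixes z :: complex
  assumes "norm z < 1"
  shows "((\<lambda>k. z ^ k) has_sum (1 / (1 - z))) UNIV"
proof (rule norm_summable_imp_has_sum)
  show "summable (\<lambda>n. norm (z ^ n))"
    using assms by (simp add: norm_power summable_geometric)
  show "(\<lambda>n. z ^ n) sums (1 / (1 - z))"
    using geometric_sums[OF assms] by simp
qed

lemma single_zeta:
  assumes "prime p" "Re s > 0"
  shows "(zeta_term fps_scale (Uop p) Vspace s has_sum (1 / (1 - of_nat p powr (- s))))
           (spec fps_scale (Uop p) Vspace - {0})"
proof -
  have p2: "p \<ge> 2" using assms(1) prime_ge_2_nat by blast
  have hs: "((\<lambda>k. (of_nat p ^ k :: complex) powr (- s)) has_sum (1 / (1 - of_nat p powr (- s)))) UNIV"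
    unfolding powr_nat_power by (rule geom_has_sum[OF norm_p_powr_lt1[OF p2 assms(2)]])
  show ?thesis
  proof (rule diag_zeta[of fps_scale "Uop p" UNIV phi "\<lambda>k. of_nat p ^ k" Vspace s, OF vs_fps])
    show "\<And>x y. Uop p (x + y) = Uop p x + Uop p y" by (rule Uop_add)
    show "\<And>c x. Uop p (fps_scale c x) = fps_scale c (Uop p x)" by (rule Uop_scale)
    show "\<And>i. i \<in> UNIV \<Longrightarrow> Uop p (phi i) = fps_scale (of_nat p ^ i) (phi i)" by (rule Uop_phi)
    show "\<And>i. i \<in> UNIV \<Longrightarrow> phi i \<noteq> 0" by (rule phi_nz)
    show "inj_on (\<lambda>k. of_nat p ^ k :: complex) UNIV" using inj_pow[OF p2] by simp
    show "Vspace = module.span fps_scale (range phi)" by (simp add: Vspace_def)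
    show "\<And>i. i \<in> UNIV \<Longrightarrow> (of_nat p ^ i :: complex) \<noteq> 0" using p2 by simp
  qed (rule hs)
qed


section \<open>Several variables\<close>

lemma vs_arr: "vector_space arr_scale"
proof
  fix a b :: complex and x y :: "nat list \<Rightarrow> complex"
  show "arr_scale a (x + y) = arr_scale a x + arr_scale a y"
    by (simp add: arr_scale_def fun_eq_iff distrib_left)
  show "arr_scale (a + b) x = arr_scale a x + arr_scale b x"
    by (simp add: arr_scale_def fun_eq_iff distrib_right)
  show "arr_scale a (arr_scale b x) = arr_scale (a * b) x"
    by (simp add: arr_scale_def fun_eq_iff)
  show "arr_scale 1 x = x"
    by (simp add: arr_scale_def)
qed

lemma US_add: "US ps (F + G) = US ps F + US ps G"
  by (simp add: US_def fun_eq_iff)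

lemma US_scale: "US ps (arr_scale c F) = arr_scale c (US ps F)"
  by (simp add: US_def arr_scale_def fun_eq_iff)

definition evm :: "nat list \<Rightarrow> nat list \<Rightarrow> complex" where
  "evm ps a = (\<Prod>i<length ps. of_nat (ps ! i ^ (a ! i)))"

lemma tensor_phi:
  "tensor (map phi a) ms = (if length ms = length a then (\<Prod>i<length a. of_nat (ms ! i) ^ (a ! i)) else 0)"
  by (simp add: tensor_def phi_nth)

lemma US_tb:
  assumes "length a = length ps"
  shows "US ps (tensor (map phi a)) = arr_scale (evm ps a) (tensor (map phi a))"
proof
  fix ms
  show "US ps (tensor (map phi a)) ms = arr_scale (evm ps a) (tensor (map phi a)) ms"
  proof (cases "length ms = length ps")
    case True
    have "US ps (tensor (map phi a)) ms = (\<Prod>i<length a. of_nat (ps ! i * ms ! i) ^ (a ! i))"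
      using True assms by (simp add: US_def tensor_phi)
    also have "\<dots> = (\<Prod>i<length a. of_nat (ps ! i ^ (a ! i)) * of_nat (ms ! i) ^ (a ! i))"
      by (simp add: power_mult_distrib)
    also have "\<dots> = evm ps a * (\<Prod>i<length a. of_nat (ms ! i) ^ (a ! i))"
      using assms by (simp add: prod.distrib evm_def)
    finally show ?thesis using True assms by (simp add: arr_scale_def tensor_phi)
  next
    case False
    thus ?thesis using assms by (simp add: US_def arr_scale_def tensor_phi)
  qed
qed

lemma tb_nz: "tensor (map phi a) \<noteq> 0"
proof
  assume "tensor (map phi a) = 0"
  hence "tensor (map phi a) (replicate (length a) 1) = 0" by simp
  thus False by (simp add: tensor_phi)
qed

lemma evm_nat: "evm ps a = of_nat (\<Prod>i<length ps. ps ! i ^ (a ! i))"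
  by (simp add: evm_def)

lemma evm_nz:
  assumes "\<forall>p\<in>set ps. prime p"
  shows "evm ps a \<noteq> 0"
proof -
  have "\<forall>i<length ps. ps ! i > 0" using assms nth_mem prime_gt_0_nat by blast
  thus ?thesis unfolding evm_nat by (simp add: prod_zero_iff)
qed

lemma mult_evm:
  assumes "distinct ps" "\<forall>p\<in>set ps. prime p" "j < length ps"
  shows "multiplicity (ps ! j) (\<Prod>i<length ps. ps ! i ^ (a ! i)) = a ! j"
proof -
  let ?n = "length ps"
  let ?h = "inv_into {..<?n} (nth ps)"
  have inj: "inj_on (nth ps) {..<?n}" using assms(1) by (simp add: inj_on_nth)
  have img: "nth ps ` {..<?n} = set ps" by (auto simp: set_conv_nth)
  have "(\<Prod>p\<in>set ps. p ^ (a ! ?h p)) = (\<Prod>i<?n. ps ! i ^ (a ! ?h (ps ! i)))"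
    unfolding img[symmetric] by (rule prod.reindex[OF inj, unfolded comp_def])
  also have "\<dots> = (\<Prod>i<?n. ps ! i ^ (a ! i))"
    by (rule prod.cong) (simp_all add: inv_into_f_f[OF inj])
  finally have eq: "(\<Prod>i<?n. ps ! i ^ (a ! i)) = (\<Prod>p\<in>set ps. p ^ (a ! ?h p))" by simp
  have "multiplicity (ps ! j) (\<Prod>p\<in>set ps. p ^ (a ! ?h p)) = a ! ?h (ps ! j)"
    using assms by (subst multiplicity_prod_prime_powers) auto
  also have "\<dots> = a ! j" using assms(3) by (simp add: inv_into_f_f[OF inj])
  finally show ?thesis using eq by simp
qed

lemma inj_evm:
  assumes "distinct ps" "\<forall>p\<in>set ps. prime p"
  shows "inj_on (evm ps) {a. length a = length ps}"
proof (rule inj_onI)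
  fix a b assume a: "a \<in> {a. length a = length ps}" and b: "b \<in> {a. length a = length ps}"
    and e: "evm ps a = evm ps b"
  hence "(\<Prod>i<length ps. ps ! i ^ (a ! i)) = (\<Prod>i<length ps. ps ! i ^ (b ! i))"
    unfolding evm_nat by (simp only: of_nat_eq_iff)
  hence "\<forall>j<length ps. a ! j = b ! j"
    using mult_evm[OF assms, of _ a] mult_evm[OF assms, of _ b] by metis
  thus "a = b" using a b by (simp add: nth_equalityI)
qed

lemma geom_has_sum':
  fixes z :: "'a::{real_normed_field,banach}"
  assumes "norm z < 1"
  shows "((\<lambda>k. z ^ k) has_sum (1 / (1 - z))) UNIV"
proof (rule norm_summable_imp_has_sum)
  show "summable (\<lambda>n. norm (z ^ n))"
    using assms by (simp add: norm_power summable_geometric)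
  show "(\<lambda>n. z ^ n) sums (1 / (1 - z))"
    using geometric_sums[OF assms] by simp
qed

lemma prod_has_sum:
  fixes zs :: "complex list"
  assumes "\<forall>z\<in>set zs. norm z < 1"
  shows "((\<lambda>a. \<Prod>i<length zs. (zs ! i) ^ (a ! i)) has_sum (\<Prod>i<length zs. 1 / (1 - zs ! i)))
           {a. length a = length zs}"
  using assms
proof (induction zs)
  case Nil
  have "{a :: nat list. length a = 0} = {[]}" by auto
  thus ?case using has_sum_finite[of "{[]}" "\<lambda>a. 1 :: complex"] by simp
next
  case (Cons z zs)
  let ?n = "length zs"
  define G where "G = (\<lambda>a :: nat list. \<Prod>i<?n. (zs ! i) ^ (a ! i))"
  define T where "T = (\<Prod>i<?n. 1 / (1 - zs ! i))"
  define L where "L = {a :: nat list. length a = ?n}"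
  have IH: "(G has_sum T) L" using Cons by (simp add: G_def T_def L_def)
  have z: "norm z < 1" using Cons.prems by simp
  define f where "f = (\<lambda>(k, a). z ^ k * G a)"
  have f1: "((\<lambda>a. f (k, a)) has_sum (z ^ k * T)) L" for k
    unfolding f_def using has_sum_cmult_right[OF IH, of "z ^ k"] by simp
  have f2: "((\<lambda>k. z ^ k * T) has_sum (1 / (1 - z) * T)) UNIV"
    by (rule has_sum_cmult_left[OF geom_has_sum'[OF z]])
  define C where "C = infsum (\<lambda>a. norm (G a)) L"
  have C0: "C \<ge> 0" unfolding C_def by (rule infsum_nonneg) simp
  have f3: "f summable_on (UNIV \<times> L)"
  proof -
    have "(\<lambda>x. norm (f x)) summable_on Sigma UNIV (\<lambda>_. L)"
    proof (rule Infinite_Sum.abs_summable_on_Sigma_iff[THEN iffD2], intro conjI ballI)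
      fix k :: nat
      show "(\<lambda>a. norm (f (k, a))) summable_on L"
        using f1 summable_on_iff_abs_summable_on_complex by (metis summable_on_def)
    next
      have eq: "infsum (\<lambda>a. norm (f (k, a))) L = norm z ^ k * C" for k
        by (simp add: f_def norm_mult norm_power C_def infsum_cmult_right')
      have "((\<lambda>k. norm z ^ k * C) has_sum (1 / (1 - norm z) * C)) UNIV"
        by (rule has_sum_cmult_left[OF geom_has_sum']) (use z in simp)
      hence "(\<lambda>k. norm z ^ k * C) summable_on UNIV" by (metis summable_on_def)
      moreover have "(\<lambda>k. norm (norm z ^ k * C)) = (\<lambda>k. norm z ^ k * C)"
        using C0 by (simp add: abs_mult)
      ultimately show "(\<lambda>k. norm (infsum (\<lambda>a. norm (f (k, a))) L)) summable_on UNIV"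
        by (simp only: eq)
    qed
    thus ?thesis by (rule summable_on_iff_abs_summable_on_complex[THEN iffD2])
  qed
  have fS: "(f has_sum (1 / (1 - z) * T)) (UNIV \<times> L)"
    by (rule has_sum_SigmaI[OF f1 f2 f3])
  have inj: "inj_on (\<lambda>(k, a). k # a) (UNIV \<times> L)" by (auto simp: inj_on_def)
  have img: "(\<lambda>(k, a). k # a) ` (UNIV \<times> L) = {a. length a = length (z # zs)}"
  proof (rule set_eqI)
    fix b :: "nat list"
    show "b \<in> (\<lambda>(k, a). k # a) ` (UNIV \<times> L) \<longleftrightarrow> b \<in> {a. length a = length (z # zs)}"
      by (cases b) (auto simp: L_def image_iff)
  qed
  define F where "F = (\<lambda>b. \<Prod>i<length (z # zs). ((z # zs) ! i) ^ (b ! i))"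
  have eqf: "F \<circ> (\<lambda>(k, a). k # a) = f"
    by (auto simp del: prod.lessThan_Suc simp: F_def fun_eq_iff f_def G_def prod.lessThan_Suc_shift)
  have "(F has_sum (1 / (1 - z) * T)) ((\<lambda>(k, a). k # a) ` (UNIV \<times> L))"
    by (subst has_sum_reindex[OF inj]) (simp only: eqf fS)
  hence "((\<lambda>b. \<Prod>i<length (z # zs). ((z # zs) ! i) ^ (b ! i)) has_sum (1 / (1 - z) * T))
           ((\<lambda>(k, a). k # a) ` (UNIV \<times> L))" by (simp only: F_def)
  moreover have "(\<Prod>i<length (z # zs). 1 / (1 - (z # zs) ! i)) = 1 / (1 - z) * T"
    by (simp del: prod.lessThan_Suc add: T_def prod.lessThan_Suc_shift)
  ultimately show ?case unfolding img by (simp only:)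
qed



definition opf :: "complex fps \<Rightarrow> (nat list \<Rightarrow> complex) \<Rightarrow> (nat list \<Rightarrow> complex)" where
  "opf g F = (\<lambda>ms. case ms of [] \<Rightarrow> 0 | m # ms' \<Rightarrow> fps_nth g m * F ms')"

lemma tensor_Cons: "tensor (f # fs) = opf f (tensor fs)"
proof
  fix ms show "tensor (f # fs) ms = opf f (tensor fs) ms"
    by (cases ms) (simp_all del: prod.lessThan_Suc add: tensor_def opf_def prod.lessThan_Suc_shift)
qed

lemma mod_arr: "module arr_scale" by (simp add: module_iff_vector_space vs_arr)
lemma mod_fps: "module fps_scale" by (simp add: module_iff_vector_space vs_fps)

lemma hom1: "module_hom arr_scale arr_scale (opf g)"
  unfolding module_hom_def module_hom_axioms_def using mod_arr
  by (auto simp: opf_def arr_scale_def fun_eq_iff algebra_simps split: list.split)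

lemma hom2: "module_hom fps_scale arr_scale (\<lambda>g. opf g F)"
  unfolding module_hom_def module_hom_axioms_def using mod_arr mod_fps
  by (auto simp: opf_def arr_scale_def fps_scale_def fun_eq_iff algebra_simps split: list.split)

lemma opf_phi: "opf (phi k) (tensor (map phi a)) = tensor (map phi (k # a))"
  by (simp add: tensor_Cons)

abbreviation Bset :: "nat \<Rightarrow> (nat list \<Rightarrow> complex) set" where
  "Bset n \<equiv> (\<lambda>a. tensor (map phi a)) ` {a. length a = n}"

lemma tensor_in_span:
  "set fs \<subseteq> Vspace \<Longrightarrow> tensor fs \<in> module.span arr_scale (Bset (length fs))"
proof (induction fs)
  case Nil
  have "tensor [] \<in> Bset 0" by (rule image_eqI[of _ _ "[]"]) auto
  thus ?case by (simp add: module.span_base[OF mod_arr])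
next
  case (Cons f fs)
  let ?n = "length fs"
  have f: "f \<in> Vspace" and IH: "tensor fs \<in> module.span arr_scale (Bset ?n)" using Cons by auto
  have sub: "opf f ` Bset ?n \<subseteq> module.span arr_scale (Bset (Suc ?n))"
  proof
    fix y assume "y \<in> opf f ` Bset ?n"
    then obtain a where a: "length a = ?n" "y = opf f (tensor (map phi a))" by auto
    have "opf f (tensor (map phi a)) \<in> (\<lambda>g. opf g (tensor (map phi a))) ` module.span fps_scale (range phi)"
      using f unfolding Vspace_def by (rule imageI)
    also have "\<dots> = module.span arr_scale ((\<lambda>g. opf g (tensor (map phi a))) ` range phi)"
      by (rule module_hom.span_image[OF hom2, symmetric])
    also have "\<dots> \<subseteq> module.span arr_scale (Bset (Suc ?n))"
    proof (rule module.span_mono[OF mod_arr])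
      show "(\<lambda>g. opf g (tensor (map phi a))) ` range phi \<subseteq> Bset (Suc ?n)"
      proof
        fix x assume "x \<in> (\<lambda>g. opf g (tensor (map phi a))) ` range phi"
        then obtain k where "x = opf (phi k) (tensor (map phi a))" by auto
        hence "x = tensor (map phi (k # a))" by (simp add: opf_phi)
        thus "x \<in> Bset (Suc ?n)" using a(1) by (intro image_eqI[of _ _ "k # a"]) auto
      qed
    qed
    finally show "y \<in> module.span arr_scale (Bset (Suc ?n))" using a(2) by simp
  qed
  have "tensor (f # fs) = opf f (tensor fs)" by (rule tensor_Cons)
  also have "\<dots> \<in> opf f ` module.span arr_scale (Bset ?n)" using IH by (rule imageI)
  also have "\<dots> = module.span arr_scale (opf f ` Bset ?n)"
    by (rule module_hom.span_image[OF hom1, symmetric])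
  also have "\<dots> \<subseteq> module.span arr_scale (module.span arr_scale (Bset (Suc ?n)))"
    by (rule module.span_mono[OF mod_arr sub])
  also have "\<dots> = module.span arr_scale (Bset (Suc ?n))" by (rule module.span_span[OF mod_arr])
  finally show ?case by simp
qed

lemma Hspace_eq: "Hspace n = module.span arr_scale (Bset n)"
proof (rule antisym)
  have "{tensor fs | fs. length fs = n \<and> set fs \<subseteq> Vspace} \<subseteq> module.span arr_scale (Bset n)"
    using tensor_in_span by auto
  hence "module.span arr_scale {tensor fs | fs. length fs = n \<and> set fs \<subseteq> Vspace}
          \<subseteq> module.span arr_scale (module.span arr_scale (Bset n))"
    by (rule module.span_mono[OF mod_arr])
  thus "Hspace n \<subseteq> module.span arr_scale (Bset n)"
    unfolding Hspace_def module.span_span[OF mod_arr] .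
next
  have "Bset n \<subseteq> {tensor fs | fs. length fs = n \<and> set fs \<subseteq> Vspace}"
  proof
    fix x assume "x \<in> Bset n"
    then obtain a where a: "length a = n" "x = tensor (map phi a)" by auto
    have "set (map phi a) \<subseteq> Vspace"
      unfolding Vspace_def by (auto intro: module.span_base[OF mod_fps])
    thus "x \<in> {tensor fs | fs. length fs = n \<and> set fs \<subseteq> Vspace}" using a by (auto intro!: exI[of _ "map phi a"])
  qed
  thus "module.span arr_scale (Bset n) \<subseteq> Hspace n"
    unfolding Hspace_def by (rule module.span_mono[OF mod_arr])
qed

lemma prod_powr:
  assumes "finite A"
  shows "(\<Prod>i\<in>A. of_nat (g i) :: complex) powr z = (\<Prod>i\<in>A. of_nat (g i) powr z)"
  using assms
proof (induction A rule: finite_induct)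
  case empty then show ?case by simp
next
  case (insert x F)
  have "(\<Prod>i\<in>insert x F. of_nat (g i) :: complex) powr z = (of_nat (g x) * of_nat (\<Prod>i\<in>F. g i)) powr z"
    using insert by simp
  also have "\<dots> = of_nat (g x) powr z * of_nat (\<Prod>i\<in>F. g i) powr z"
    by (rule powr_times_real) (simp_all del: of_nat_prod add: Reals_of_nat)
  finally show ?case using insert by simp
qed

lemma prod_list_map_nth: "prod_list (map h xs) = (\<Prod>i<length xs. h (xs ! i))"
  by (induction xs) (simp_all del: prod.lessThan_Suc add: prod.lessThan_Suc_shift)

lemma multi_has_sum:
  assumes "\<forall>p\<in>set ps. prime p" "Re s > 0"
  shows "((\<lambda>a. evm ps a powr (- s)) has_sum (\<Prod>i<length ps. 1 / (1 - of_nat (ps ! i) powr (- s))))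
           {a. length a = length ps}"
proof -
  define zs where "zs = map (\<lambda>p. of_nat p powr (- s) :: complex) ps"
  have zs: "\<forall>z\<in>set zs. norm z < 1"
    using assms unfolding zs_def by (auto intro!: norm_p_powr_lt1 prime_ge_2_nat)
  have "evm ps a powr (- s) = (\<Prod>i<length zs. (zs ! i) ^ (a ! i))" for a
  proof -
    have "evm ps a powr (- s) = (\<Prod>i<length ps. of_nat (ps ! i ^ (a ! i)) powr (- s))"
      unfolding evm_def by (rule prod_powr) simp
    also have "\<dots> = (\<Prod>i<length ps. (of_nat (ps ! i) powr (- s)) ^ (a ! i))"
      by (simp add: powr_nat_power[symmetric])
    finally show ?thesis by (simp add: zs_def)
  qed
  moreover have "(\<Prod>i<length ps. 1 / (1 - of_nat (ps ! i) powr (- s))) = (\<Prod>i<length zs. 1 / (1 - zs ! i))"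
    by (simp add: zs_def)
  moreover have "length zs = length ps" by (simp add: zs_def)
  ultimately show ?thesis using prod_has_sum[OF zs] by simp
qed

theorem mainTheorem4:
  fixes ps :: "nat list" and s :: complex
  assumes "distinct ps" and "\<forall>p\<in>set ps. prime p" and "Re s > 0"
  shows "zeta_term arr_scale (US ps) (Hspace (length ps)) s
           summable_on (spec arr_scale (US ps) (Hspace (length ps)) - {0})
       \<and> spectral_zeta arr_scale (US ps) (Hspace (length ps)) s
           = (\<Prod>p\<in>set ps. spectral_zeta fps_scale (Uop p) Vspace s)
       \<and> (\<Prod>p\<in>set ps. spectral_zeta fps_scale (Uop p) Vspace s)
           = (\<Prod>p\<in>set ps. 1 / (1 - of_nat p powr (- s)))"
proof -
  let ?n = "length ps"
  let ?P = "\<Prod>i<?n. 1 / (1 - of_nat (ps ! i) powr (- s))"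
  have hs: "(zeta_term arr_scale (US ps) (Hspace ?n) s has_sum ?P) (spec arr_scale (US ps) (Hspace ?n) - {0})"
  proof (rule diag_zeta[of arr_scale "US ps" "{a. length a = ?n}" "\<lambda>a. tensor (map phi a)" "evm ps" "Hspace ?n" s, OF vs_arr])
    show "\<And>x y. US ps (x + y) = US ps x + US ps y" by (rule US_add)
    show "\<And>c x. US ps (arr_scale c x) = arr_scale c (US ps x)" by (rule US_scale)
    show "\<And>i. i \<in> {a. length a = ?n} \<Longrightarrow> US ps (tensor (map phi i)) = arr_scale (evm ps i) (tensor (map phi i))"
      by (rule US_tb) simp
    show "\<And>i. i \<in> {a. length a = ?n} \<Longrightarrow> tensor (map phi i) \<noteq> 0" by (rule tb_nz)
    show "inj_on (evm ps) {a. length a = ?n}" by (rule inj_evm[OF assms(1,2)])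
    show "Hspace ?n = module.span arr_scale ((\<lambda>a. tensor (map phi a)) ` {a. length a = ?n})"
      by (rule Hspace_eq)
    show "\<And>i. i \<in> {a. length a = ?n} \<Longrightarrow> evm ps i \<noteq> 0" by (rule evm_nz[OF assms(2)])
  qed (rule multi_has_sum[OF assms(2,3)])
  have single: "spectral_zeta fps_scale (Uop p) Vspace s = 1 / (1 - of_nat p powr (- s))"
    if "p \<in> set ps" for p
    unfolding spectral_zeta_def using single_zeta[of p s] that assms(2,3) by (simp add: infsumI)
  have conv: "(\<Prod>p\<in>set ps. h p) = (\<Prod>i<?n. h (ps ! i))" for h :: "nat \<Rightarrow> complex"
    by (simp add: prod.distinct_set_conv_list[OF assms(1)] prod_list_map_nth)
  have c3: "(\<Prod>p\<in>set ps. spectral_zeta fps_scale (Uop p) Vspace s)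
           = (\<Prod>p\<in>set ps. 1 / (1 - of_nat p powr (- s)))"
    by (rule prod.cong) (simp_all add: single)
  have c2: "spectral_zeta arr_scale (US ps) (Hspace ?n) s = ?P"
    unfolding spectral_zeta_def using hs by (rule infsumI)
  show ?thesis
    using hs c3 c2 conv by (auto simp: summable_on_def)
qed

end
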